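(* Let $Q=\operatorname{diag}(\lambda_1,\lambda_2,\lambda_3)$ with $-\tfrac13<\lambda_1\le\lambda_2\le\lambda_3<\tfrac23$ and $\lambda_1+\lambda_2+\lambda_3=0$, and let $\mu_1,\mu_2,\mu_3$ be the Lagrange multipliers of its optimal density $\rho_Q$. Then $\mu_1\le\mu_2\le\mu_3$, and $\mu_i=\mu_j$ whenever $\lambda_i=\lambda_j$ ($1\le i\ne j\le 3$).
   Context: Points of the unit sphere $\mathbb S^2$ are written $(x,y,z)$, and $\mathrm dS$ is surface measure. For a physical $Q$ (symmetric traceless with all eigenvalues in $(-\tfrac13,\tfrac23)$) the Ball–Majumdar potential is $f(Q)=\inf\int_{\mathbb S^2}\rho\ln\rho\,\mathrm dS$ over even probability densities $\rho$ with $\int(\mathbf n\otimes\mathbf n-\tfrac13I_3)\rho\,\mathrm dS=Q$. For diagonal physical $Q=\operatorname{diag}(\lambda_1,\lambda_2,\lambda_3)$ this infimum is attained by the density $\rho_Q(x,y,z)=\exp(\mu_1x^2+\mu_2y^2+\mu_3z^2)/Z$, $Z=\int_{\mathbb S^2}\exp(\mu_1x^2+\mu_2y^2+\mu_3z^2)\,\mathrm dS$, where the real numbers $\mu_1,\mu_2,\mu_3$ (the Lagrange multipliers) satisfy $\mu_1+\mu_2+\mu_3=0$ and $\frac1Z\frac{\partial Z}{\partial\mu_i}=\lambda_i+\tfrac13$, i.e. $\int x^2\rho_Q\,\mathrm dS=\lambda_1+\tfrac13$, $\int y^2\rho_Q\,\mathrm dS=\lambda_2+\tfrac13$, $\int z^2\rho_Q\,\mathrm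 dS=\lambda_3+\tfrac13$. *)

theory Defs
  imports "HOL-Analysis.Analysis"
begin

text \<open>Integral over the unit sphere S^2 with respect to surface measure dS,
  written in spherical coordinates (x,y,z) = (sin t cos p, sin t sin p, cos t),
  dS = sin t dt dp, t in [0,pi], p in [0,2 pi].\<close>
definition sphere_integral :: "(real \<Rightarrow> real \<Rightarrow> real \<Rightarrow> real) \<Rightarrow> real" where
  "sphere_integral g =
     (LBINT p=0..2*pi. (LBINT t=0..pi. g (sin t * cos p) (sin t * sin p) (cos t) * sin t))"

definition partition_Z :: "real \<Rightarrow> real \<Rightarrow> real \<Rightarrow> real" where
  "partition_Z m1 m2 m3 = sphere_integral (\<lambda>x y z. exp (m1 * x^2 + m2 * y^2 + m3 * z^2))"

definition rhoQ :: "real \<Rightarrow> real \<Rightarrow> real \<Rightarrow> real \<Rightarrow> real \<Rightarrow> real \<Rightarrow> real" where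
  "rhoQ m1 m2 m3 x y z = exp (m1 * x^2 + m2 * y^2 + m3 * z^2) / partition_Z m1 m2 m3"

end

theory Submission
  imports Defs
begin

definition cont2 :: "(real \<Rightarrow> real \<Rightarrow> real) \<Rightarrow> bool" where
  "cont2 F \<longleftrightarrow> continuous_on UNIV (\<lambda>z. F (fst z) (snd z))"

definition I2 :: "(real \<Rightarrow> real \<Rightarrow> real) \<Rightarrow> real" where
  "I2 F = integral {0..2*pi} (\<lambda>p. integral {0..pi} (F p))"

lemma cont2_inner:
  assumes "cont2 F" shows "continuous_on S (F p)"
proof -
  have "continuous_on UNIV (\<lambda>t. (\<lambda>z. F (fst z) (snd z)) (p, t))"
    using assms unfolding cont2_def
    by (intro continuous_on_compose2[OF assms[unfolded cont2_def]]) (auto intro!: continuous_intros)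
  then show ?thesis by (auto intro: continuous_on_subset)
qed

lemma cont2_outer:
  assumes "cont2 F" shows "continuous_on S (\<lambda>p. integral {0..pi} (F p))"
proof -
  have "continuous_on (UNIV \<times> cbox 0 pi) (\<lambda>(x, t). F x t)"
    using assms unfolding cont2_def split_beta' by (auto intro: continuous_on_subset)
  from integral_continuous_on_param[OF this] show ?thesis
    by (auto intro: continuous_on_subset)
qed

lemma SI:
  assumes "cont2 F"
  shows "(LBINT p=0..2*pi. (LBINT t=0..pi. F p t)) = I2 F"
proof -
  have 1: "(LBINT t=0..pi. F p t) = integral {0..pi} (F p)" for p
    unfolding zero_ereal_def
    by (rule interval_integral_eq_integral) (auto intro!: borel_integrable_atLeastAtMost' cont2_inner assms)
  show ?thesis unfolding 1 unfolding I2_def zero_ereal_def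
    by (rule interval_integral_eq_integral) (auto intro!: borel_integrable_atLeastAtMost' cont2_outer assms)
qed

lemma int_cmul: "integral S (\<lambda>x. c * f x) = c * integral S (f :: _ \<Rightarrow> real)"
  using integral_cmul[of S c f] by simp

lemma I2_cmul: "I2 (\<lambda>p t. c * F p t) = c * I2 F"
  unfolding I2_def int_cmul by simp

lemma I2_lin3:
  assumes "cont2 F" "cont2 G" "cont2 H"
  shows "I2 (\<lambda>p t. F p t - G p t + c * H p t) = I2 F - I2 G + c * I2 H"
proof -
  have i: "f integrable_on {a..b}" if "continuous_on {a..b} f" for f :: "real \<Rightarrow> real" and a b
    using that integrable_continuous_real by blast
  have "integral {0..pi} (\<lambda>t. F p t - G p t + c * H p t) =
        integral {0..pi} (F p) - integral {0..pi} (G p) + c * integral {0..pi} (H p)" for p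
    apply (subst integral_add)
    apply (rule i, intro continuous_intros cont2_inner assms)+
    apply (subst integral_diff)
    apply (rule i, intro continuous_intros cont2_inner assms)+
    by (simp add: int_cmul)
  then have "I2 (\<lambda>p t. F p t - G p t + c * H p t) = integral {0..2*pi} (\<lambda>p.
        integral {0..pi} (F p) - integral {0..pi} (G p) + c * integral {0..pi} (H p))"
    unfolding I2_def by simp
  also have "\<dots> = I2 F - I2 G + c * I2 H"
    unfolding I2_def
    apply (subst integral_add)
    apply (rule i, intro continuous_intros cont2_outer assms)+
    apply (subst integral_diff)
    apply (rule i, intro continuous_intros cont2_outer assms)+
    by (simp add: int_cmul)
  finally show ?thesis .
qed

lemma int_pos:
  fixes f :: "real \<Rightarrow> real"
  assumes "continuous_on {a..b} f" "a < b" "\<And>x. x \<in> {a..b} \<Longrightarrow> f x \<ge> 0"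
    "x0 \<in> {a..b}" "f x0 > 0"
  shows "integral {a..b} f > 0"
proof -
  have "integral {a..b} f \<ge> 0"
    using assms by (intro integral_nonneg integrable_continuous_real) auto
  moreover have "integral {a..b} f \<noteq> 0"
    using integral_eq_0_iff[OF assms(1-3)] assms(4,5) by auto
  ultimately show ?thesis by linarith
qed

lemma I2_pos:
  assumes "cont2 F" "\<And>p t. t \<in> {0..pi} \<Longrightarrow> F p t \<ge> 0"
    "p0 \<in> {0..2*pi}" "t0 \<in> {0..pi}" "F p0 t0 > 0"
  shows "I2 F > 0"
  unfolding I2_def
proof (rule int_pos[OF cont2_outer[OF assms(1)] _ _ assms(3)])
  show "0 < 2 * pi" by simp
  show "0 \<le> integral {0..pi} (F p)" for p
    using assms by (intro integral_nonneg integrable_continuous_real cont2_inner) auto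
  show "0 < integral {0..pi} (F p0)"
    by (rule int_pos[OF cont2_inner[OF assms(1)] _ _ assms(4,5)]) (use assms in auto)
qed

lemma IBP:
  assumes "cont2 At" "cont2 Bp"
    and dA: "\<And>p t. ((\<lambda>t. A p t) has_real_derivative At p t) (at t)"
    and dB: "\<And>p t. ((\<lambda>p. B p t) has_real_derivative Bp p t) (at p)"
    and "\<And>p. A p 0 = 0" "\<And>p. A p pi = 0" "\<And>t. B 0 t = B (2*pi) t"
  shows "I2 (\<lambda>p t. At p t + Bp p t) = 0"
proof -
  have i: "f integrable_on {a..b}" if "continuous_on {a..b} f" for f :: "real \<Rightarrow> real" and a b
    using that integrable_continuous_real by blast
  have ftcA: "integral {0..pi} (At p) = 0" for p
  proof -
    have "(At p has_integral (A p pi - A p 0)) {0..pi}"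
      by (rule fundamental_theorem_of_calculus)
        (auto intro!: has_field_derivative_at_within[OF dA] simp: has_real_derivative_iff_has_vector_derivative[symmetric])
    then show ?thesis using assms(5,6) by (simp add: integral_unique)
  qed
  have ftcB: "integral {0..2*pi} (\<lambda>p. Bp p t) = 0" for t
  proof -
    have "((\<lambda>p. Bp p t) has_integral (B (2*pi) t - B 0 t)) {0..2*pi}"
      by (rule fundamental_theorem_of_calculus[where f="\<lambda>p. B p t"])
        (auto intro!: has_field_derivative_at_within[OF dB] simp: has_real_derivative_iff_has_vector_derivative[symmetric])
    then show ?thesis using assms(7) by (simp add: integral_unique)
  qed
  have "I2 (\<lambda>p t. At p t + Bp p t) = integral {0..2*pi} (\<lambda>p. integral {0..pi} (Bp p))"
    unfolding I2_def
    apply (subst integral_add)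
    apply (rule i, intro continuous_intros cont2_inner assms)+
    by (simp add: ftcA)
  also have "\<dots> = integral {0..pi} (\<lambda>t. integral {0..2*pi} (\<lambda>p. Bp p t))"
  proof -
    have "continuous_on (cbox (0, 0) (2*pi, pi)) (\<lambda>(x, y). Bp x y)"
      using assms(2) unfolding cont2_def split_beta' by (auto intro: continuous_on_subset)
    from integral_swap_continuous[OF this] show ?thesis by simp
  qed
  also have "\<dots> = 0" by (simp add: ftcB)
  finally show ?thesis .
qed


lemma deriv_xy:
  fixes m1 m2 m3 :: real
  defines "E \<equiv> \<lambda>p t. exp (m1 * (sin t * cos p)^2 + m2 * (sin t * sin p)^2 + m3 * (cos t)^2)"
  shows "((\<lambda>p. (sin t * cos p) * (sin t * sin p) * E p t * sin t) has_real_derivative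
     ((sin t * cos p)^2 * E p t * sin t - (sin t * sin p)^2 * E p t * sin t
      + (2 * (m2-m1)) * ((sin t * cos p)^2 * (sin t * sin p)^2 * E p t * sin t))) (at p)"
  unfolding E_def
  apply (rule derivative_eq_intros refl | simp)+
  by (simp add: power2_eq_square algebra_simps)

lemma deriv_yz:
  fixes m1 m2 m3 :: real
  defines "E \<equiv> \<lambda>p t. exp (m1 * (sin t * cos p)^2 + m2 * (sin t * sin p)^2 + m3 * (cos t)^2)"
  shows "((\<lambda>t. - ((sin p)^2) * ((sin t)^2 * cos t) * E p t) has_real_derivative
     (- ((sin p)^2) * ((2 * sin t * cos t * cos t - (sin t)^2 * sin t) * E p t + (sin t)^2 * cos t * E p t *
       (m1 * (2 * (sin t * cos p) * (cos t * cos p)) + m2 * (2 * (sin t * sin p) * (cos t * sin p)) - m3 * (2 * cos t * sin t))))) (at t)"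
  unfolding E_def
  apply (rule derivative_eq_intros refl | simp)+
  by (simp add: power2_eq_square algebra_simps)

lemma deriv_yz2:
  fixes m1 m2 m3 :: real
  defines "E \<equiv> \<lambda>p t. exp (m1 * (sin t * cos p)^2 + m2 * (sin t * sin p)^2 + m3 * (cos t)^2)"
  shows "((\<lambda>p. - ((cos t)^2) * sin t * (sin p * cos p) * E p t) has_real_derivative
     (- ((cos t)^2) * sin t * ((cos p * cos p - sin p * sin p) * E p t + sin p * cos p * E p t *
       (m1 * (2 * (sin t * cos p) * (-sin t * sin p)) + m2 * (2 * (sin t * sin p) * (sin t * cos p)))))) (at p)"
  unfolding E_def
  apply (rule derivative_eq_intros refl | simp)+
  by (simp add: power2_eq_square algebra_simps)

lemma alg_yz:
  fixes s c sp cp e m1 m2 m3 :: real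
  assumes "sp^2 + cp^2 = 1"
  shows "(- (sp^2) * ((2 * s * c * c - (s)^2 * s) * e + (s)^2 * c * e *
       (m1 * (2 * (s * cp) * (c * cp)) + m2 * (2 * (s * sp) * (c * sp)) - m3 * (2 * c * s))))
     + (- (c^2) * s * ((cp * cp - sp * sp) * e + sp * cp * e *
       (m1 * (2 * (s * cp) * (-s * sp)) + m2 * (2 * (s * sp) * (s * cp)))))
   = (s * sp)^2 * e * s - c^2 * e * s + (2 * (m3-m2)) * ((s * sp)^2 * c^2 * e * s)"
  using assms by algebra

lemma SI':
  assumes "cont2 (\<lambda>p t. g (sin t * cos p) (sin t * sin p) (cos t) * sin t)"
  shows "sphere_integral g = I2 (\<lambda>p t. g (sin t * cos p) (sin t * sin p) (cos t) * sin t)"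
  unfolding sphere_integral_def using SI[OF assms] by simp

theorem lemma2p1:
  fixes l1 l2 l3 m1 m2 m3 :: real
  assumes "-1/3 < l1" and "l1 \<le> l2" and "l2 \<le> l3" and "l3 < 2/3"
    and "l1 + l2 + l3 = 0"
    and "m1 + m2 + m3 = 0"
    and "sphere_integral (\<lambda>x y z. x^2 * rhoQ m1 m2 m3 x y z) = l1 + 1/3"
    and "sphere_integral (\<lambda>x y z. y^2 * rhoQ m1 m2 m3 x y z) = l2 + 1/3"
    and "sphere_integral (\<lambda>x y z. z^2 * rhoQ m1 m2 m3 x y z) = l3 + 1/3"
  shows "m1 \<le> m2 \<and> m2 \<le> m3
    \<and> (l1 = l2 \<longrightarrow> m1 = m2) \<and> (l1 = l3 \<longrightarrow> m1 = m3) \<and> (l2 = l3 \<longrightarrow> m2 = m3)"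
proof -
  define E where "E = (\<lambda>p t. exp (m1 * (sin t * cos p)^2 + m2 * (sin t * sin p)^2 + m3 * (cos t)^2))"
  define Zc where "Zc = partition_Z m1 m2 m3"
  define Ix where "Ix = I2 (\<lambda>p t. (sin t * cos p)^2 * E p t * sin t)"
  define Iy where "Iy = I2 (\<lambda>p t. (sin t * sin p)^2 * E p t * sin t)"
  define Iz where "Iz = I2 (\<lambda>p t. (cos t)^2 * E p t * sin t)"
  define Pxy where "Pxy = I2 (\<lambda>p t. (sin t * cos p)^2 * (sin t * sin p)^2 * E p t * sin t)"
  define Pyz where "Pyz = I2 (\<lambda>p t. (sin t * sin p)^2 * (cos t)^2 * E p t * sin t)"
  have Epos: "E p t > 0" for p t unfolding E_def by simp
  have sinnn: "t \<in> {0..pi} \<Longrightarrow> sin t \<ge> 0" for t by (simp add: sin_ge_zero)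
  have ZcI: "Zc = I2 (\<lambda>p t. E p t * sin t)"
    unfolding Zc_def partition_Z_def E_def
    by (rule SI') (simp add: cont2_def, intro continuous_intros)
  have Zpos: "Zc > 0" unfolding ZcI
    by (rule I2_pos[of _ 0 "pi/2"])
      (auto simp: cont2_def E_def intro!: continuous_intros sinnn mult_nonneg_nonneg)
  have Zne: "partition_Z m1 m2 m3 \<noteq> 0" using Zpos Zc_def by simp
  have hx: "l1 + 1/3 = Ix / Zc"
  proof -
    have "sphere_integral (\<lambda>x y z. x^2 * rhoQ m1 m2 m3 x y z)
        = I2 (\<lambda>p t. (1/Zc) * ((sin t * cos p)^2 * E p t * sin t))"
      by (subst SI') (auto simp: cont2_def rhoQ_def E_def Zc_def Zne intro!: continuous_intros)
    then show ?thesis using assms(7) unfolding I2_cmul Ix_def by simp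
  qed
  have hy: "l2 + 1/3 = Iy / Zc"
  proof -
    have "sphere_integral (\<lambda>x y z. y^2 * rhoQ m1 m2 m3 x y z)
        = I2 (\<lambda>p t. (1/Zc) * ((sin t * sin p)^2 * E p t * sin t))"
      by (subst SI') (auto simp: cont2_def rhoQ_def E_def Zc_def Zne intro!: continuous_intros)
    then show ?thesis using assms(8) unfolding I2_cmul Iy_def by simp
  qed
  have hz: "l3 + 1/3 = Iz / Zc"
  proof -
    have "sphere_integral (\<lambda>x y z. z^2 * rhoQ m1 m2 m3 x y z)
        = I2 (\<lambda>p t. (1/Zc) * ((cos t)^2 * E p t * sin t))"
      by (subst SI') (auto simp: cont2_def rhoQ_def E_def Zc_def Zne intro!: continuous_intros)
    then show ?thesis using assms(9) unfolding I2_cmul Iz_def by simp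
  qed
  have Pxy_pos: "Pxy > 0" unfolding Pxy_def
    by (rule I2_pos[of _ "pi/4" "pi/2"])
      (auto simp: cont2_def E_def cos_45 sin_45 intro!: continuous_intros sinnn mult_nonneg_nonneg)
  have Pyz_pos: "Pyz > 0" unfolding Pyz_def
    by (rule I2_pos[of _ "pi/2" "pi/4"])
      (auto simp: cont2_def E_def cos_45 sin_45 intro!: continuous_intros sinnn mult_nonneg_nonneg)
  have xy: "Ix - Iy + (2*(m2-m1)) * Pxy = 0"
  proof -
    have "I2 (\<lambda>p t. 0 + ((sin t * cos p)^2 * E p t * sin t - (sin t * sin p)^2 * E p t * sin t
      + (2*(m2-m1)) * ((sin t * cos p)^2 * (sin t * sin p)^2 * E p t * sin t))) = 0"
      apply (rule IBP[where A="\<lambda>p t. 0" and B="\<lambda>p t. (sin t * cos p) * (sin t * sin p) * E p t * sin t"])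
      subgoal by (simp add: cont2_def)
      subgoal by (simp add: cont2_def E_def, intro continuous_intros)
      subgoal by simp
      subgoal by (unfold E_def, rule deriv_xy)
      subgoal by simp
      subgoal by simp
      subgoal by simp
      done
    moreover have "I2 (\<lambda>p t. (sin t * cos p)^2 * E p t * sin t - (sin t * sin p)^2 * E p t * sin t
      + (2*(m2-m1)) * ((sin t * cos p)^2 * (sin t * sin p)^2 * E p t * sin t)) = Ix - Iy + (2*(m2-m1)) * Pxy"
      unfolding Ix_def Iy_def Pxy_def
      by (rule I2_lin3; simp add: cont2_def E_def; intro continuous_intros)
    ultimately show ?thesis by simp
  qed
  have yz: "Iy - Iz + (2*(m3-m2)) * Pyz = 0"
  proof -
    have eqf: "(\<lambda>p t. (- ((sin p)^2) * ((2 * sin t * cos t * cos t - (sin t)^2 * sin t) * E p t + (sin t)^2 * cos t * E p t *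
       (m1 * (2 * (sin t * cos p) * (cos t * cos p)) + m2 * (2 * (sin t * sin p) * (cos t * sin p)) - m3 * (2 * cos t * sin t))))
      + (- ((cos t)^2) * sin t * ((cos p * cos p - sin p * sin p) * E p t + sin p * cos p * E p t *
       (m1 * (2 * (sin t * cos p) * (- sin t * sin p)) + m2 * (2 * (sin t * sin p) * (sin t * cos p))))))
      = (\<lambda>p t. (sin t * sin p)^2 * E p t * sin t - (cos t)^2 * E p t * sin t
          + (2*(m3-m2)) * ((sin t * sin p)^2 * (cos t)^2 * E p t * sin t))"
      by (intro ext alg_yz sin_cos_squared_add)
    have "I2 (\<lambda>p t. (- ((sin p)^2) * ((2 * sin t * cos t * cos t - (sin t)^2 * sin t) * E p t + (sin t)^2 * cos t * E p t *
       (m1 * (2 * (sin t * cos p) * (cos t * cos p)) + m2 * (2 * (sin t * sin p) * (cos t * sin p)) - m3 * (2 * cos t * sin t))))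
      + (- ((cos t)^2) * sin t * ((cos p * cos p - sin p * sin p) * E p t + sin p * cos p * E p t *
       (m1 * (2 * (sin t * cos p) * (- sin t * sin p)) + m2 * (2 * (sin t * sin p) * (sin t * cos p)))))) = 0"
      apply (rule IBP[where A="\<lambda>p t. - ((sin p)^2) * ((sin t)^2 * cos t) * E p t"
            and B="\<lambda>p t. - ((cos t)^2) * sin t * (sin p * cos p) * E p t"])
      subgoal by (simp add: cont2_def E_def, intro continuous_intros)
      subgoal by (simp add: cont2_def E_def, intro continuous_intros)
      subgoal by (unfold E_def, rule deriv_yz)
      subgoal by (unfold E_def, rule deriv_yz2)
      subgoal by simp
      subgoal by simp
      subgoal by simp
      done
    moreover have "I2 (\<lambda>p t. (sin t * sin p)^2 * E p t * sin t - (cos t)^2 * E p t * sin t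
          + (2*(m3-m2)) * ((sin t * sin p)^2 * (cos t)^2 * E p t * sin t)) = Iy - Iz + (2*(m3-m2)) * Pyz"
      unfolding Iy_def Iz_def Pyz_def
      by (rule I2_lin3; simp add: cont2_def E_def; intro continuous_intros)
    ultimately show ?thesis unfolding eqf by simp
  qed
  have e12: "(l2 - l1) * Zc = 2 * (m2 - m1) * Pxy"
    using hx hy xy Zpos by (simp add: field_simps)
  have e23: "(l3 - l2) * Zc = 2 * (m3 - m2) * Pyz"
    using hz hy yz Zpos by (simp add: field_simps)
  define k12 where "k12 = 2*Pxy/Zc"
  define k23 where "k23 = 2*Pyz/Zc"
  have k12: "k12 > 0" using Pxy_pos Zpos unfolding k12_def by simp
  have k23: "k23 > 0" using Pyz_pos Zpos unfolding k23_def by simp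
  have d12: "l2 - l1 = k12 * (m2 - m1)" using e12 Zpos unfolding k12_def by (simp add: field_simps)
  have d23: "l3 - l2 = k23 * (m3 - m2)" using e23 Zpos unfolding k23_def by (simp add: field_simps)
  have "0 \<le> k12 * (m2 - m1)" using d12 assms(2) by linarith
  then have a1: "m1 \<le> m2" using k12 by (simp add: zero_le_mult_iff)
  have "0 \<le> k23 * (m3 - m2)" using d23 assms(3) by linarith
  then have a2: "m2 \<le> m3" using k23 by (simp add: zero_le_mult_iff)
  have a3: "l1 = l2 \<longrightarrow> m1 = m2" using d12 k12 by auto
  have a4: "l2 = l3 \<longrightarrow> m2 = m3" using d23 k23 by auto
  have a5: "l1 = l3 \<longrightarrow> m1 = m3" using a3 a4 assms(2,3) by auto
  show ?thesis using a1 a2 a3 a4 a5 by auto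
qed

end
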